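(* In the setting described in the context, fix $t\in\mathbb{Z}_+$ and $\delta\in(0,1)$, let $\widehat k$ be any element of $\mathop{\mathrm{argmin}}_{k\in[t]}\{\widehat\phi(t,k,\delta)+\widehat\psi(t,k,\delta)\}$, and suppose that (on some realization of the data) $|\widehat{\mu}_{t,k}-\mu_t|\le\phi(t,k)+\widehat\psi(t,k,\delta)$ holds for every $k\in[t]$. Then $$|\widehat\mu_{t,\widehat k}-\mu_t|\le 3\min_{k\in[t]}\big\{\phi(t,k)+\widehat\psi(t,k,\delta)\big\}.$$
   Context: Let $a<b$ be real numbers, $M=b-a$, and $t\in\mathbb{Z}_+$. For each $j\in[t]$ let $\mathcal{Q}_j$ be a probability distribution on $[a,b]$ with mean $\mu_j$, and let $B_j\ge 1$ be an integer; the data are $u_{j,i}\in[a,b]$, $j\in[t]$, $i\in[B_j]$ (with $u_{j,i}\sim\mathcal{Q}_j$ independent). For $k\in[t]$ define $B_{t,k}=\sum_{j=t-k+1}^t B_j$, $\widehat{\mu}_{t,k}=\frac{1}{B_{t,k}}\sum_{j=t-k+1}^t\sum_{i=1}^{B_j}u_{j,i}$, $\phi(t,k)=\max_{t-k+1\le j\le t}|\mu_j-\mu_t|$, when $B_{t,k}\ge2$, $\widehat v_{t,k}^2=\frac{1}{B_{t,k}-1}\sum_{j=t-k+1}^t\sum_{i=1}^{B_j}(u_{j,i}-\widehat\mu_{t,k})^2$ with $\widehat v_{t,k}\ge0$, and for $\delta\in(0,1)$ $$\widehat\psi(t,k,\delta)=\begin{cases} M, & B_{t,k}=1,\\ \widehat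 v_{t,k}\sqrt{\frac{2\log(2/\delta)}{B_{t,k}}}+\frac{8M\log(2/\delta)}{3(B_{t,k}-1)}, & B_{t,k}\ge 2,\end{cases}\qquad \widehat\phi(t,k,\delta)=\max_{i\in[k]}\Big(|\widehat\mu_{t,k}-\widehat\mu_{t,i}|-\big[\widehat\psi(t,k,\delta)+\widehat\psi(t,i,\delta)\big]\Big)_+,$$ where $x_+=\max\{x,0\}$. *)

theory Defs
  imports "HOL-Analysis.Analysis"
begin

text \<open>Data: batch sizes B j, observations u j i (j in {1..t}, i in {1..B j}),
  true means mu j. Windows consist of the k most recent periods t-k+1,...,t.\<close>

definition Btk :: "(nat \<Rightarrow> nat) \<Rightarrow> nat \<Rightarrow> nat \<Rightarrow> nat" where
  "Btk B t k = (\<Sum>j\<in>{t-k+1..t}. B j)"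

definition muhat :: "(nat \<Rightarrow> nat) \<Rightarrow> (nat \<Rightarrow> nat \<Rightarrow> real) \<Rightarrow> nat \<Rightarrow> nat \<Rightarrow> real" where
  "muhat B u t k = (\<Sum>j\<in>{t-k+1..t}. \<Sum>i\<in>{1..B j}. u j i) / real (Btk B t k)"

definition phi :: "(nat \<Rightarrow> real) \<Rightarrow> nat \<Rightarrow> nat \<Rightarrow> real" where
  "phi mu t k = Max ((\<lambda>j. \<bar>mu j - mu t\<bar>) ` {t-k+1..t})"

definition vhat :: "(nat \<Rightarrow> nat) \<Rightarrow> (nat \<Rightarrow> nat \<Rightarrow> real) \<Rightarrow> nat \<Rightarrow> nat \<Rightarrow> real" where
  "vhat B u t k = sqrt ((\<Sum>j\<in>{t-k+1..t}. \<Sum>i\<in>{1..B j}. (u j i - muhat B u t k)\<^sup>2)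
                        / (real (Btk B t k) - 1))"

definition psihat :: "real \<Rightarrow> (nat \<Rightarrow> nat) \<Rightarrow> (nat \<Rightarrow> nat \<Rightarrow> real) \<Rightarrow> nat \<Rightarrow> nat \<Rightarrow> real \<Rightarrow> real" where
  "psihat M B u t k \<delta> =
     (if Btk B t k = 1 then M
      else vhat B u t k * sqrt (2 * ln (2 / \<delta>) / real (Btk B t k))
           + 8 * M * ln (2 / \<delta>) / (3 * (real (Btk B t k) - 1)))"

definition phihat :: "real \<Rightarrow> (nat \<Rightarrow> nat) \<Rightarrow> (nat \<Rightarrow> nat \<Rightarrow> real) \<Rightarrow> nat \<Rightarrow> nat \<Rightarrow> real \<Rightarrow> real" where
  "phihat M B u t k \<delta> =
     Max ((\<lambda>i. max 0 (\<bar>muhat B u t k - muhat B u t i\<bar>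
                       - (psihat M B u t k \<delta> + psihat M B u t i \<delta>))) ` {1..k})"

end

theory Submission
  imports Defs
begin

lemma phi_mono:
  assumes "1 \<le> i" "i \<le> k" "k \<le> t"
  shows "phi mu t i \<le> phi mu t k"
  unfolding phi_def
proof (rule Max_mono)
  show "(\<lambda>j. \<bar>mu j - mu t\<bar>) ` {t - i + 1..t} \<subseteq> (\<lambda>j. \<bar>mu j - mu t\<bar>) ` {t - k + 1..t}"
    using assms by (intro image_mono) auto
  show "(\<lambda>j. \<bar>mu j - mu t\<bar>) ` {t - i + 1..t} \<noteq> {}" using assms by auto
qed auto

lemma phi_nonneg:
  assumes "1 \<le> k" "k \<le> t"
  shows "0 \<le> phi mu t k"
proof -
  have "\<bar>mu t - mu t\<bar> \<le> phi mu t k"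
    unfolding phi_def using assms by (intro Max_ge) auto
  thus ?thesis by simp
qed

lemma phihat_ge:
  assumes "1 \<le> i" "i \<le> k"
  shows "max 0 (\<bar>muhat B u t k - muhat B u t i\<bar> - (psihat M B u t k \<delta> + psihat M B u t i \<delta>))
         \<le> phihat M B u t k \<delta>"
  unfolding phihat_def using assms by (intro Max_ge) auto

lemma phihat_nonneg:
  assumes "1 \<le> k"
  shows "0 \<le> phihat M B u t k \<delta>"
  using phihat_ge[OF assms order_refl, of B u t M \<delta>] by linarith

lemma phihat_le:
  assumes "1 \<le> k" "k \<le> t"
    and event: "\<forall>k\<in>{1..t}. \<bar>muhat B u t k - mu t\<bar> \<le> phi mu t k + psihat M B u t k \<delta>"
  shows "phihat M B u t k \<delta> \<le> 2 * phi mu t k"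
  unfolding phihat_def
proof (subst Max_le_iff, simp, use assms in simp, safe)
  fix i assume i: "i \<in> {1..k}"
  have e1: "\<bar>muhat B u t k - mu t\<bar> \<le> phi mu t k + psihat M B u t k \<delta>" using event assms by auto
  have e2: "\<bar>muhat B u t i - mu t\<bar> \<le> phi mu t i + psihat M B u t i \<delta>" using event assms i by auto
  have m: "phi mu t i \<le> phi mu t k" using phi_mono[of i k t mu] i assms by auto
  have z: "0 \<le> phi mu t k" using phi_nonneg assms by blast
  show "max 0 (\<bar>muhat B u t k - muhat B u t i\<bar> - (psihat M B u t k \<delta> + psihat M B u t i \<delta>))
         \<le> 2 * phi mu t k"
    using e1 e2 m z by (auto simp: abs_if split: if_splits)
qed

lemma psihat_nonneg:
  assumes "1 \<le> k" "k \<le> t" "\<forall>j\<in>{1..t}. B j \<ge> 1" "0 < M" "0 < \<delta>" "\<delta> < 1"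
  shows "0 \<le> psihat M B u t k \<delta>"
proof -
  have "B t \<le> Btk B t k" unfolding Btk_def using assms
    by (intro member_le_sum) auto
  moreover have "B t \<ge> 1" using assms by auto
  ultimately have bt: "Btk B t k \<ge> 1" by linarith
  have l: "ln (2 / \<delta>) > 0" using assms by (simp add: ln_gt_zero_iff)
  show ?thesis
  proof (cases "Btk B t k = 1")
    case True thus ?thesis unfolding psihat_def using assms by simp
  next
    case False
    then have b2: "real (Btk B t k) \<ge> 2" using bt by linarith
    have v: "vhat B u t k \<ge> 0" unfolding vhat_def using b2
      by (intro real_sqrt_ge_zero divide_nonneg_pos sum_nonneg) auto
    have "0 \<le> vhat B u t k * sqrt (2 * ln (2 / \<delta>) / real (Btk B t k))"
      using v l b2 by (intro mult_nonneg_nonneg real_sqrt_ge_zero) auto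
    moreover have "0 \<le> 8 * M * ln (2 / \<delta>) / (3 * (real (Btk B t k) - 1))"
      using l b2 assms by (intro divide_nonneg_pos) auto
    ultimately show ?thesis unfolding psihat_def using False by simp
  qed
qed

theorem mainTheorem5:
  fixes a b :: real and t :: nat and \<delta> :: real
    and B :: "nat \<Rightarrow> nat" and u :: "nat \<Rightarrow> nat \<Rightarrow> real" and mu :: "nat \<Rightarrow> real"
    and khat :: nat
  assumes ab: "a < b"
    and t_pos: "t \<ge> 1"
    and delta: "0 < \<delta>" "\<delta> < 1"
    and B_pos: "\<forall>j\<in>{1..t}. B j \<ge> 1"
    and u_range: "\<forall>j\<in>{1..t}. \<forall>i\<in>{1..B j}. a \<le> u j i \<and> u j i \<le> b"
    and mu_range: "\<forall>j\<in>{1..t}. a \<le> mu j \<and> mu j \<le> b"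
    and khat_mem: "khat \<in> {1..t}"
    and khat_min: "\<forall>k\<in>{1..t}. phihat (b - a) B u t khat \<delta> + psihat (b - a) B u t khat \<delta>
                               \<le> phihat (b - a) B u t k \<delta> + psihat (b - a) B u t k \<delta>"
    and event: "\<forall>k\<in>{1..t}. \<bar>muhat B u t k - mu t\<bar> \<le> phi mu t k + psihat (b - a) B u t k \<delta>"
  shows "\<bar>muhat B u t khat - mu t\<bar>
           \<le> 3 * Min ((\<lambda>k. phi mu t k + psihat (b - a) B u t k \<delta>) ` {1..t})"
proof -
  let ?f = "\<lambda>k. phi mu t k + psihat (b - a) B u t k \<delta>"
  have "Min (?f ` {1..t}) \<in> ?f ` {1..t}" using t_pos by (intro Min_in) auto
  then obtain ks where ks: "ks \<in> {1..t}" and kmin: "Min (?f ` {1..t}) = ?f ks" by auto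
  have hk: "phihat (b - a) B u t ks \<delta> \<le> 2 * phi mu t ks" using ks event phihat_le by auto
  have mn: "phihat (b - a) B u t khat \<delta> + psihat (b - a) B u t khat \<delta>
             \<le> phihat (b - a) B u t ks \<delta> + psihat (b - a) B u t ks \<delta>" using khat_min ks by auto
  have ek: "\<bar>muhat B u t khat - mu t\<bar> \<le> phi mu t khat + psihat (b - a) B u t khat \<delta>"
    using event khat_mem by auto
  have es: "\<bar>muhat B u t ks - mu t\<bar> \<le> phi mu t ks + psihat (b - a) B u t ks \<delta>"
    using event ks by auto
  show ?thesis
  proof (cases "khat \<le> ks")
    case True
    have "phi mu t khat \<le> phi mu t ks" using phi_mono[of khat ks t mu] True khat_mem ks by auto
    moreover have "0 \<le> phihat (b - a) B u t khat \<delta>" using phihat_nonneg khat_mem by auto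
    moreover have "0 \<le> psihat (b - a) B u t ks \<delta>" using psihat_nonneg ks B_pos ab delta by auto
    ultimately show ?thesis using ek mn hk kmin by linarith
  next
    case False
    have "max 0 (\<bar>muhat B u t khat - muhat B u t ks\<bar> - (psihat (b - a) B u t khat \<delta> + psihat (b - a) B u t ks \<delta>))
         \<le> phihat (b - a) B u t khat \<delta>" using False ks by (intro phihat_ge) auto
    then have "\<bar>muhat B u t khat - muhat B u t ks\<bar> \<le> phihat (b - a) B u t khat \<delta> + psihat (b - a) B u t khat \<delta> + psihat (b - a) B u t ks \<delta>"
      by linarith
    then show ?thesis using es mn hk kmin by linarith
  qed
qed

end
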